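(* Let $q\in(0,1]$ and $m>0$. Suppose that $\sup_{T\in\mathbb T}E[|\hat u_T|^m]<\infty$ where $\hat u_T=a_T^{-1}(\hat\theta_T-\theta^* )$, that [A6] holds (for every $j\in\mathcal J^{(0)}$, $(\xi_T^j)^{-1/q}|\alpha_T^j|^{-1}\to0$ in probability), and that as $T\to\infty$ $$(\tilde a_T^{(00)})^{-1}(\hat\theta_T^{(0)}-\theta^{*(0)})\to0\ \text{in probability},\qquad (\tilde a_T^{(11)})^{-1}(\hat\theta_T^{(1)}-\theta^{*(1)})\to(\Gamma^{(11)})^{-1}(\Delta^{(1)}-\psi^{(1)})\ \text{in distribution},$$ where $\Delta$ is a random vector in $\mathbb R^{\mathsf p}$, $\Gamma$ an almost surely positive definite random $\mathsf p\times\mathsf p$ matrix, and $\psi^{(1)}\in\mathbb R^{|\mathcal J^{(1)}|}$ a vector. Let $\tilde u_\infty\in\mathbb R^{\mathsf p}$ be the random vector with $\tilde u_\infty^{(0)}=0$ and $\tilde u_\infty^{(1)}=(\Gamma^{(11)})^{-1}(\Delta^{(1)}-\psi^{(1)})$. Then $$E[f(\hat u_T)]\to E[f(\tilde u_\infty)]\quad (T\to\infty)$$ for every continuous $f:\mathbb R^{\mathsf p}\to\mathbb R$ with $\limsup_{|u|\to\infty}|f(u)||u|^{-m}=0$.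
   Context: Let $\Theta\subset\mathbb R^{\mathsf p}$ be a bounded open set with closure $\overline\Theta$ and $\theta^*\in\Theta$. Let $(\Omega,\mathcal F,P)$ be a probability space, $\mathbb T\subset\mathbb R_{\ge0}$ with $\sup\mathbb T=\infty$; limits $T\to\infty$ are along $\mathbb T$. For each $T\in\mathbb T$, $\mathbb H_T:\Omega\times\overline\Theta\to\mathbb R$ is a random field continuous in $\theta$ for every $\omega$. The penalty is $p_T(\theta)=\sum_{j=1}^{\mathsf p}\xi_T^jp(\theta_j)$ with (possibly random) $\xi_T^j>0$ and $p:\mathbb R\to\mathbb R_{\ge0}$, $p(0)=0$; $\mathbb H^\dagger_T=\mathbb H_T-p_T$, and $\hat\theta_T:\Omega\to\overline\Theta$ is measurable with $\mathbb H^\dagger_T(\hat\theta_T)=\max_{\overline\Theta}\mathbb H^\dagger_T$. $\mathcal J^{(0)}=\{j:\theta^*_j=0\}$, $\mathcal J^{(1)}=\{j:\theta^*_j\ne0\}$; $x^{(k)}=(x_j)_{j\in\mathcal J^{(k)}}$, $A^{(kl)}=(A_{ij})_{i\in\mathcal J^{(k)},j\in\mathcal J^{(l)}}$. $a_T=\mathrm{diag}(\alpha_T^1,\dots,\alpha_T^{\mathsf p})$ is deterministic, invertible, with $\|a_T\|\to0$. $\tilde a_T$ is diagonal with $(\tilde a_T)_{jj}=(\xi_T^j)^{-1/q}$ for $j\in\mathcal J^{(0)}$ and $\alpha_T^j$ for $j\in\mathcal J^{(1)}$. *)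

theory Defs
  imports "HOL-Probability.Probability"
begin

definition along :: "real set \<Rightarrow> real filter" where
  "along TT = at_top \<sqinter> principal TT"

text \<open>Coordinate projection onto the index set J (the components outside J are set to 0);
  this is how a subvector x^(J) is embedded into the full space.\<close>
definition proj :: "'p set \<Rightarrow> real^'p \<Rightarrow> real^'p" where
  "proj J x = (\<chi> j. if j \<in> J then x $ j else 0)"

text \<open>(A^(JJ))^(-1) w^(J), embedded with zeros outside J.  The block-diagonal matrix
  diag(A^(JJ), I) is inverted; if it is not invertible (a null event in our use)
  the value is 0 by convention.\<close>
definition block_inv_apply :: "'p set \<Rightarrow> real^'p^'p \<Rightarrow> real^'p \<Rightarrow> real^'p" where
  "block_inv_apply J A w =
     (let B = (\<chi> i k. if i \<in> J \<and> k \<in> J then A $ i $ k else if i = k then 1 else 0)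
      in if invertible B then matrix_inv B *v proj J w else 0)"

definition conv_in_prob :: "'a measure \<Rightarrow> 'i filter \<Rightarrow> ('i \<Rightarrow> 'a \<Rightarrow> 'b::metric_space) \<Rightarrow> 'b \<Rightarrow> bool" where
  "conv_in_prob M F X c \<longleftrightarrow>
     (\<forall>e>0. ((\<lambda>T. measure M {\<omega> \<in> space M. dist (X T \<omega>) c > e}) \<longlongrightarrow> 0) F)"

definition conv_in_distr :: "'a measure \<Rightarrow> 'i filter \<Rightarrow> ('i \<Rightarrow> 'a \<Rightarrow> 'b::topological_space) \<Rightarrow> ('a \<Rightarrow> 'b) \<Rightarrow> bool" where
  "conv_in_distr M F X Y \<longleftrightarrow>
     (\<forall>g::'b \<Rightarrow> real. continuous_on UNIV g \<and> bounded (range g) \<longrightarrow>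
        ((\<lambda>T. integral\<^sup>L M (\<lambda>\<omega>. g (X T \<omega>))) \<longlongrightarrow> integral\<^sup>L M (\<lambda>\<omega>. g (Y \<omega>))) F)"

end

theory Submission
  imports Defs
begin


lemma along_eventually_TT: "eventually (\<lambda>T. T \<in> TT) (along TT)"
  unfolding along_def by (simp add: eventually_inf_principal)

lemma along_nontriv:
  assumes "\<forall>x. \<exists>T\<in>TT. x < T"
  shows "along TT \<noteq> bot"
proof
  assume "along TT = bot"
  then have "eventually (\<lambda>_. False) (along TT)" by simp
  then have "eventually (\<lambda>x. x \<notin> TT) at_top"
    unfolding along_def eventually_inf_principal by simp
  then obtain N :: real where "\<forall>x\<ge>N. x \<notin> TT" by (auto simp: eventually_at_top_linorder)
  with assms show False by (meson less_le_not_le nle_le)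
qed

lemma measurable_vec:
  fixes f :: "'a \<Rightarrow> 'b::euclidean_space ^'n"
  assumes "\<And>i. (\<lambda>x. f x $ i) \<in> borel_measurable M"
  shows "f \<in> borel_measurable M"
proof (subst borel_measurable_euclidean_space, intro ballI)
  fix b :: "'b^'n" assume "b \<in> Basis"
  then obtain i u where b: "b = axis i u" "u \<in> Basis" by (auto simp: Basis_vec_def)
  have "(\<lambda>x. f x \<bullet> b) = (\<lambda>x. f x $ i \<bullet> u)" using b by (simp add: inner_axis)
  then show "(\<lambda>x. f x \<bullet> b) \<in> borel_measurable M" using assms[of i] by simp
qed

lemma measurable_nth:
  fixes f :: "'a \<Rightarrow> 'b::euclidean_space ^'n"
  assumes "f \<in> borel_measurable M"
  shows "(\<lambda>x. f x $ i) \<in> borel_measurable M"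
proof -
  have "(\<lambda>x::'b^'n. x $ i) \<in> borel_measurable borel"
    by (intro borel_measurable_continuous_onI continuous_intros)
  from measurable_compose[OF assms this] show ?thesis by simp
qed

lemma integral_norm_bound_integral':
  fixes f :: "'a \<Rightarrow> 'b::{banach,second_countable_topology}"
  assumes "integrable M f" "integrable M g" "\<And>x. x \<in> space M \<Longrightarrow> norm(f x) \<le> g x"
  shows "norm (\<integral>x. f x \<partial>M) \<le> (\<integral>x. g x \<partial>M)"
  by (smt (verit, best) assms integrable_norm integral_mono integral_norm_bound)

definition cp :: "'a measure \<Rightarrow> 'i filter \<Rightarrow> ('i \<Rightarrow> 'a \<Rightarrow> real) \<Rightarrow> bool" where
  "cp M F X \<longleftrightarrow> (\<forall>e>0. ((\<lambda>T. measure M {\<omega> \<in> space M. X T \<omega> > e}) \<longlongrightarrow> 0) F)"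

lemma sandwich0:
  fixes f g :: "'i \<Rightarrow> real"
  assumes "(g \<longlongrightarrow> z) F" "eventually (\<lambda>T. f T \<le> g T) F" "\<And>T. 0 \<le> f T" "z = 0"
  shows "(f \<longlongrightarrow> 0) F"
proof -
  have g0: "(g \<longlongrightarrow> 0) F" using assms(1) assms(4) by simp
  show ?thesis by (rule tendsto_sandwich[OF _ assms(2) tendsto_const g0]) (simp add: assms(3))
qed

lemma cp_mono:
  assumes "finite_measure M" "cp M F Y"
    and "eventually (\<lambda>T. Y T \<in> borel_measurable M \<and> (\<forall>\<omega>\<in>space M. X T \<omega> \<le> Y T \<omega>)) F"
  shows "cp M F X"
  unfolding cp_def
proof (intro allI impI)
  fix e :: real assume e: "e > 0"
  have "((\<lambda>T. measure M {\<omega> \<in> space M. Y T \<omega> > e}) \<longlongrightarrow> 0) F" using assms(2) e by (simp add: cp_def)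
  moreover have "eventually (\<lambda>T. measure M {\<omega> \<in> space M. X T \<omega> > e} \<le> measure M {\<omega> \<in> space M. Y T \<omega> > e}) F"
    using assms(3)
  proof eventually_elim
    case (elim T)
    then have [measurable]: "Y T \<in> borel_measurable M" by simp
    have "{\<omega> \<in> space M. Y T \<omega> > e} \<in> sets M" by measurable
    then show ?case 
      by (rule finite_measure.finite_measure_mono[OF assms(1), rotated]) (use elim in auto)
  qed
  ultimately show "((\<lambda>T. measure M {\<omega> \<in> space M. X T \<omega> > e}) \<longlongrightarrow> 0) F"
    by (rule sandwich0) (simp_all add: measure_nonneg)
qed

lemma cp_add:
  assumes "finite_measure M" "cp M F X" "cp M F Y"
    and "eventually (\<lambda>T. X T \<in> borel_measurable M \<and> Y T \<in> borel_measurable M) F"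
  shows "cp M F (\<lambda>T \<omega>. X T \<omega> + Y T \<omega>)"
  unfolding cp_def
proof (intro allI impI)
  fix e :: real assume e: "e > 0"
  have "((\<lambda>T. measure M {\<omega> \<in> space M. X T \<omega> > e/2} + measure M {\<omega> \<in> space M. Y T \<omega> > e/2}) \<longlongrightarrow> 0 + 0) F"
  proof -
    have "e/2 > 0" using e by simp
    then show ?thesis using assms(2,3) unfolding cp_def by (intro tendsto_add) blast+
  qed
  moreover have "eventually (\<lambda>T. measure M {\<omega> \<in> space M. X T \<omega> + Y T \<omega> > e} \<le> 
     measure M {\<omega> \<in> space M. X T \<omega> > e/2} + measure M {\<omega> \<in> space M. Y T \<omega> > e/2}) F"
    using assms(4)
  proof eventually_elim
    case (elim T)
    then have [measurable]: "Y T \<in> borel_measurable M" "X T \<in> borel_measurable M" by simp_all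
    have s: "{\<omega> \<in> space M. X T \<omega> > e/2} \<in> sets M" "{\<omega> \<in> space M. Y T \<omega> > e/2} \<in> sets M" by measurable
    have "measure M {\<omega> \<in> space M. X T \<omega> + Y T \<omega> > e} \<le> measure M ({\<omega> \<in> space M. X T \<omega> > e/2} \<union> {\<omega> \<in> space M. Y T \<omega> > e/2})"
      using s by (intro finite_measure.finite_measure_mono[OF assms(1)]) auto
    also have "\<dots> \<le> measure M {\<omega> \<in> space M. X T \<omega> > e/2} + measure M {\<omega> \<in> space M. Y T \<omega> > e/2}"
      using s by (rule measure_Un_le)
    finally show ?case .
  qed
  ultimately show "((\<lambda>T. measure M {\<omega> \<in> space M. X T \<omega> + Y T \<omega> > e}) \<longlongrightarrow> 0) F"
    by (rule sandwich0) (simp_all add: measure_nonneg)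
qed

lemma cp_mult:
  assumes "finite_measure M" "cp M F X" "cp M F Y"
    and "eventually (\<lambda>T. X T \<in> borel_measurable M \<and> Y T \<in> borel_measurable M \<and>
      (\<forall>\<omega>\<in>space M. X T \<omega> \<ge> 0 \<and> Y T \<omega> \<ge> 0)) F"
  shows "cp M F (\<lambda>T \<omega>. X T \<omega> * Y T \<omega>)"
  unfolding cp_def
proof (intro allI impI)
  fix e :: real assume e: "e > 0"
  have "((\<lambda>T. measure M {\<omega> \<in> space M. X T \<omega> > sqrt e} + measure M {\<omega> \<in> space M. Y T \<omega> > sqrt e}) \<longlongrightarrow> 0 + 0) F"
    using assms(2,3) e by (intro tendsto_add) (auto simp: cp_def)
  moreover have "eventually (\<lambda>T. measure M {\<omega> \<in> space M. X T \<omega> * Y T \<omega> > e} \<le> 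
     measure M {\<omega> \<in> space M. X T \<omega> > sqrt e} + measure M {\<omega> \<in> space M. Y T \<omega> > sqrt e}) F"
    using assms(4)
  proof eventually_elim
    case (elim T)
    then have [measurable]: "Y T \<in> borel_measurable M" "X T \<in> borel_measurable M" by simp_all
    have s: "{\<omega> \<in> space M. X T \<omega> > sqrt e} \<in> sets M" "{\<omega> \<in> space M. Y T \<omega> > sqrt e} \<in> sets M" by measurable
    have sub: "{\<omega> \<in> space M. X T \<omega> * Y T \<omega> > e} \<subseteq> {\<omega> \<in> space M. X T \<omega> > sqrt e} \<union> {\<omega> \<in> space M. Y T \<omega> > sqrt e}"
    proof
      fix \<omega> assume w: "\<omega> \<in> {\<omega> \<in> space M. X T \<omega> * Y T \<omega> > e}"
      show "\<omega> \<in> {\<omega> \<in> space M. X T \<omega> > sqrt e} \<union> {\<omega> \<in> space M. Y T \<omega> > sqrt e}"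
      proof (rule ccontr)
        assume "\<omega> \<notin> {\<omega> \<in> space M. X T \<omega> > sqrt e} \<union> {\<omega> \<in> space M. Y T \<omega> > sqrt e}"
        with w have "X T \<omega> \<le> sqrt e" "Y T \<omega> \<le> sqrt e" "X T \<omega> \<ge> 0" "Y T \<omega> \<ge> 0" using elim by auto
        then have "X T \<omega> * Y T \<omega> \<le> sqrt e * sqrt e" using e by (intro mult_mono) auto
        with w e show False by simp
      qed
    qed
    have "measure M {\<omega> \<in> space M. X T \<omega> * Y T \<omega> > e} \<le> measure M ({\<omega> \<in> space M. X T \<omega> > sqrt e} \<union> {\<omega> \<in> space M. Y T \<omega> > sqrt e})"
      using s sub by (intro finite_measure.finite_measure_mono[OF assms(1)]) auto
    also have "\<dots> \<le> measure M {\<omega> \<in> space M. X T \<omega> > sqrt e} + measure M {\<omega> \<in> space M. Y T \<omega> > sqrt e}"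
      using s by (rule measure_Un_le)
    finally show ?case .
  qed
  ultimately show "((\<lambda>T. measure M {\<omega> \<in> space M. X T \<omega> * Y T \<omega> > e}) \<longlongrightarrow> 0) F"
    by (rule sandwich0) (simp_all add: measure_nonneg)
qed

lemma cp_zero: "cp M F (\<lambda>T \<omega>. 0)"
  by (simp add: cp_def)

lemma cp_sum:
  assumes "finite_measure M" "finite I" "\<And>i. i \<in> I \<Longrightarrow> cp M F (X i)"
    and "\<And>i. i \<in> I \<Longrightarrow> eventually (\<lambda>T. X i T \<in> borel_measurable M) F"
  shows "cp M F (\<lambda>T \<omega>. \<Sum>i\<in>I. X i T \<omega>) \<and> eventually (\<lambda>T. (\<lambda>\<omega>. \<Sum>i\<in>I. X i T \<omega>) \<in> borel_measurable M) F"
  using assms(2-)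
proof (induction I rule: finite_induct)
  case empty
  then show ?case by (simp add: cp_zero)
next
  case (insert x I)
  then have ev: "eventually (\<lambda>T. X x T \<in> borel_measurable M \<and> (\<lambda>\<omega>. \<Sum>i\<in>I. X i T \<omega>) \<in> borel_measurable M) F"
    by (intro eventually_conj) auto
  have "cp M F (\<lambda>T \<omega>. X x T \<omega> + (\<Sum>i\<in>I. X i T \<omega>))"
    using insert by (intro cp_add[OF assms(1)] ev) auto
  moreover have "eventually (\<lambda>T. (\<lambda>\<omega>. X x T \<omega> + (\<Sum>i\<in>I. X i T \<omega>)) \<in> borel_measurable M) F"
    using ev by eventually_elim (intro borel_measurable_add, auto)
  ultimately show ?case using insert by simp
qed



lemma cont_norm_powr: "m > 0 \<Longrightarrow> continuous_on UNIV (\<lambda>x::'b::real_normed_vector. norm x powr m)"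
  by (intro continuous_on_powr' continuous_intros) auto

lemma SUP_min_ennreal: "(SUP K::nat. ennreal (min a (real K))) = ennreal a"
proof (rule antisym)
  show "(SUP K::nat. ennreal (min a (real K))) \<le> ennreal a"
    by (intro SUP_least ennreal_leI) simp
  obtain K :: nat where "a \<le> real K" using real_arch_simple by blast
  then have "ennreal a = ennreal (min a (real K))" by simp
  also have "\<dots> \<le> (SUP K::nat. ennreal (min a (real K)))" by (rule SUP_upper) simp
  finally show "ennreal a \<le> (SUP K::nat. ennreal (min a (real K)))" .
qed

lemma limit_bound:
  fixes Y :: "'i \<Rightarrow> 'a \<Rightarrow> 'b::euclidean_space" and U :: "'a \<Rightarrow> 'b" and h :: "'b \<Rightarrow> real"
  assumes M: "prob_space M" and Fnt: "F \<noteq> bot"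
    and conv: "conv_in_distr M F Y U" and Umeas: "U \<in> borel_measurable M"
    and ev: "eventually (\<lambda>T. Y T \<in> borel_measurable M \<and> integrable M (\<lambda>\<omega>. h (Y T \<omega>)) \<and>
               integral\<^sup>L M (\<lambda>\<omega>. h (Y T \<omega>)) \<le> c) F"
    and hc: "continuous_on UNIV h" and hnn: "\<And>x. h x \<ge> 0"
  shows "integrable M (\<lambda>\<omega>. h (U \<omega>)) \<and> integral\<^sup>L M (\<lambda>\<omega>. h (U \<omega>)) \<le> c"
proof -
  interpret prob_space M by (rule M)
  have hm[measurable]: "h \<in> borel_measurable borel" using hc by (rule borel_measurable_continuous_onI)
  have [measurable]: "U \<in> borel_measurable M" by (rule Umeas)
  have c0: "c \<ge> 0"
  proof -
    from eventually_happens'[OF Fnt ev] obtain T where T: "Y T \<in> borel_measurable M"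
      "integral\<^sup>L M (\<lambda>\<omega>. h (Y T \<omega>)) \<le> c" by blast
    have "0 \<le> integral\<^sup>L M (\<lambda>\<omega>. h (Y T \<omega>))" by (intro integral_nonneg_AE) (simp add: hnn)
    with T show ?thesis by simp
  qed
  have K: "integral\<^sup>L M (\<lambda>\<omega>. min (h (U \<omega>)) (real K)) \<le> c" for K :: nat
  proof -
    let ?g = "\<lambda>x. min (h x) (real K)"
    have gc: "continuous_on UNIV ?g" using hc by (intro continuous_intros)
    have gb: "bounded (range ?g)" unfolding bounded_iff using hnn by (intro exI[of _ "real K"]) auto
    have lim: "((\<lambda>T. integral\<^sup>L M (\<lambda>\<omega>. ?g (Y T \<omega>))) \<longlongrightarrow> integral\<^sup>L M (\<lambda>\<omega>. ?g (U \<omega>))) F"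
      using conv gc gb unfolding conv_in_distr_def by blast
    show ?thesis
    proof (rule tendsto_upperbound[OF lim _ Fnt])
      show "eventually (\<lambda>T. integral\<^sup>L M (\<lambda>\<omega>. ?g (Y T \<omega>)) \<le> c) F"
        using ev
      proof eventually_elim
        case (elim T)
        then have [measurable]: "Y T \<in> borel_measurable M" by simp
        have "integral\<^sup>L M (\<lambda>\<omega>. ?g (Y T \<omega>)) \<le> integral\<^sup>L M (\<lambda>\<omega>. h (Y T \<omega>))"
        proof (rule integral_mono)
          show "integrable M (\<lambda>\<omega>. ?g (Y T \<omega>))"
            by (rule integrable_const_bound[where B="real K"]) (auto intro!: AE_I2 simp: hnn)
        qed (use elim in auto)
        with elim show ?case by simp
      qed
    qed
  qed
  have nnK: "(\<integral>\<^sup>+\<omega>. ennreal (min (h (U \<omega>)) (real K)) \<partial>M) \<le> ennreal c" for K :: nat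
  proof -
    have "integrable M (\<lambda>\<omega>. min (h (U \<omega>)) (real K))"
      by (rule integrable_const_bound[where B="real K"]) (auto intro!: AE_I2 simp: hnn)
    then have "(\<integral>\<^sup>+\<omega>. ennreal (min (h (U \<omega>)) (real K)) \<partial>M) = ennreal (integral\<^sup>L M (\<lambda>\<omega>. min (h (U \<omega>)) (real K)))"
      by (intro nn_integral_eq_integral) (auto simp: hnn)
    then show ?thesis using K[of K] by (simp add: ennreal_leI)
  qed
  have "(\<integral>\<^sup>+\<omega>. ennreal (h (U \<omega>)) \<partial>M) = (\<integral>\<^sup>+\<omega>. (SUP K::nat. ennreal (min (h (U \<omega>)) (real K))) \<partial>M)"
    by (simp only: SUP_min_ennreal)
  also have "\<dots> = (SUP K::nat. \<integral>\<^sup>+\<omega>. ennreal (min (h (U \<omega>)) (real K)) \<partial>M)"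
    apply (rule nn_integral_monotone_convergence_SUP)
    subgoal unfolding incseq_def le_fun_def by (intro allI impI ennreal_leI) simp
    subgoal by measurable
    done
  also have "\<dots> \<le> ennreal c" by (intro SUP_least nnK)
  finally have nn: "(\<integral>\<^sup>+\<omega>. ennreal (h (U \<omega>)) \<partial>M) \<le> ennreal c" .
  have int: "integrable M (\<lambda>\<omega>. h (U \<omega>))"
  proof (rule integrableI_bounded)
    show "(\<integral>\<^sup>+\<omega>. ennreal (norm (h (U \<omega>))) \<partial>M) < \<infinity>"
      using nn hnn by (simp add: order.strict_trans1)
  qed simp
  have "ennreal (integral\<^sup>L M (\<lambda>\<omega>. h (U \<omega>))) \<le> ennreal c"
    using nn by (subst nn_integral_eq_integral[symmetric]) (auto simp: int hnn)
  then have "integral\<^sup>L M (\<lambda>\<omega>. h (U \<omega>)) \<le> c" using c0 by (simp add: ennreal_le_iff)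
  with int show ?thesis by simp
qed



lemma slutsky:
  fixes Y Z :: "'i \<Rightarrow> 'a \<Rightarrow> 'b::euclidean_space" and U :: "'a \<Rightarrow> 'b"
  assumes M: "prob_space M" and Fnt: "F \<noteq> bot"
    and conv: "conv_in_distr M F Z U"
    and meas: "eventually (\<lambda>T. Y T \<in> borel_measurable M \<and> Z T \<in> borel_measurable M) F"
    and dst: "cp M F (\<lambda>T \<omega>. dist (Y T \<omega>) (Z T \<omega>))"
    and tight: "\<forall>\<epsilon>>0. \<exists>R. eventually (\<lambda>T. measure M {\<omega>\<in>space M. norm (Y T \<omega>) > R} \<le> \<epsilon>) F"
  shows "conv_in_distr M F Y U"
  unfolding conv_in_distr_def
proof (intro allI impI)
  fix g :: "'b \<Rightarrow> real"
  assume g: "continuous_on UNIV g \<and> bounded (range g)"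
  then obtain B0 where "\<forall>x\<in>range g. norm x \<le> B0" by (auto simp: bounded_iff)
  define B where "B = max B0 1"
  have B: "\<And>x. \<bar>g x\<bar> \<le> B" "B > 0"
    using \<open>\<forall>x\<in>range g. norm x \<le> B0\<close> by (auto simp: B_def intro: order.trans[OF _ max.cobounded1])
  have bnd: "\<bar>g x - g y\<bar> \<le> 2*B" for x y using B(1)[of x] B(1)[of y] by linarith
  interpret prob_space M by (rule M)
  have gmeas: "g \<in> borel_measurable borel" using g by (intro borel_measurable_continuous_onI) simp
  have lim: "((\<lambda>T. integral\<^sup>L M (\<lambda>\<omega>. g (Z T \<omega>))) \<longlongrightarrow> integral\<^sup>L M (\<lambda>\<omega>. g (U \<omega>))) F"
    using conv g unfolding conv_in_distr_def by blast
  have diff: "((\<lambda>T. integral\<^sup>L M (\<lambda>\<omega>. g (Y T \<omega>)) - integral\<^sup>L M (\<lambda>\<omega>. g (Z T \<omega>))) \<longlongrightarrow> 0) F"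
  proof (rule tendstoI)
    fix \<epsilon> :: real assume \<epsilon>: "\<epsilon> > 0"
    define e where "e = \<epsilon> / (2 * (1 + 4 * B))"
    have e: "e > 0" using \<epsilon> B by (simp add: e_def)
    obtain R where R: "eventually (\<lambda>T. measure M {\<omega>\<in>space M. norm (Y T \<omega>) > R} \<le> e) F"
      using tight e by blast
    have "uniformly_continuous_on (cball 0 (R+1)) g"
      using g by (intro compact_uniformly_continuous) (auto intro: continuous_on_subset)
    then obtain d where d: "d > 0" "\<forall>x\<in>cball 0 (R+1). \<forall>x'\<in>cball 0 (R+1). dist x' x < d \<longrightarrow> dist (g x') (g x) < e"
      using e unfolding uniformly_continuous_on_def by metis
    define \<delta> where "\<delta> = min d 1 / 2"
    have \<delta>: "\<delta> > 0" "\<delta> < d" "\<delta> \<le> 1" using d by (auto simp: \<delta>_def)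
    have "((\<lambda>T. measure M {\<omega> \<in> space M. dist (Y T \<omega>) (Z T \<omega>) > \<delta>}) \<longlongrightarrow> 0) F"
      using dst \<delta> unfolding cp_def by blast
    then have P2: "eventually (\<lambda>T. measure M {\<omega> \<in> space M. dist (Y T \<omega>) (Z T \<omega>) > \<delta>} < e) F"
      using e by (rule order_tendstoD)
    show "eventually (\<lambda>T. dist (integral\<^sup>L M (\<lambda>\<omega>. g (Y T \<omega>)) - integral\<^sup>L M (\<lambda>\<omega>. g (Z T \<omega>))) 0 < \<epsilon>) F"
      using R P2 meas
    proof eventually_elim
      case (elim T)
      then have [measurable]: "Y T \<in> borel_measurable M" "Z T \<in> borel_measurable M" by simp_all
      define A1 where "A1 = {\<omega>\<in>space M. norm (Y T \<omega>) > R}"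
      define A2 where "A2 = {\<omega> \<in> space M. dist (Y T \<omega>) (Z T \<omega>) > \<delta>}"
      have A[measurable]: "A1 \<in> sets M" "A2 \<in> sets M" unfolding A1_def A2_def by measurable
      have [measurable]: "(\<lambda>\<omega>. g (Y T \<omega>)) \<in> borel_measurable M" "(\<lambda>\<omega>. g (Z T \<omega>)) \<in> borel_measurable M"
        using gmeas by (auto intro: measurable_compose)
      have iY: "integrable M (\<lambda>\<omega>. g (Y T \<omega>) - g (Z T \<omega>))"
        by (rule integrable_const_bound[where B="2*B"]) (auto intro!: AE_I2 simp: bnd)
      have iYa: "integrable M (\<lambda>\<omega>. g (Y T \<omega>))" "integrable M (\<lambda>\<omega>. g (Z T \<omega>))"
        by (rule integrable_const_bound[where B="B"], auto intro!: AE_I2 simp: B)+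
      have iR: "integrable M (\<lambda>\<omega>. e + 2*B * indicator A1 \<omega> + 2*B * indicator A2 \<omega>)"
        by (rule integrable_const_bound[where B="e + 4*B"]) (use e B(2) in \<open>auto intro!: AE_I2 simp: indicator_def\<close>)
      have pt: "norm (g (Y T \<omega>) - g (Z T \<omega>)) \<le> e + 2*B * indicator A1 \<omega> + 2*B * indicator A2 \<omega>"
        if w: "\<omega> \<in> space M" for \<omega>
      proof (cases "\<omega> \<in> A1 \<or> \<omega> \<in> A2")
        case True
        have "norm (g (Y T \<omega>) - g (Z T \<omega>)) \<le> 2 * B"
          using B(1)[of "Y T \<omega>"] B(1)[of "Z T \<omega>"] by simp
        then show ?thesis using True e B by (auto simp: indicator_def)
      next
        case False
        then have "norm (Y T \<omega>) \<le> R" "dist (Y T \<omega>) (Z T \<omega>) \<le> \<delta>" using w by (auto simp: A1_def A2_def)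
        moreover have "norm (Z T \<omega>) \<le> norm (Y T \<omega>) + dist (Y T \<omega>) (Z T \<omega>)"
          by (metis dist_norm norm_minus_commute norm_triangle_sub add.commute)
        ultimately have "Y T \<omega> \<in> cball 0 (R+1)" "Z T \<omega> \<in> cball 0 (R+1)" "dist (Z T \<omega>) (Y T \<omega>) < d"
          using \<delta> by (auto simp: dist_commute)
        then have "dist (g (Z T \<omega>)) (g (Y T \<omega>)) < e" using d by blast
        then show ?thesis using False by (auto simp: dist_real_def)
      qed
      have "norm (integral\<^sup>L M (\<lambda>\<omega>. g (Y T \<omega>) - g (Z T \<omega>))) \<le> integral\<^sup>L M (\<lambda>\<omega>. e + 2*B * indicator A1 \<omega> + 2*B * indicator A2 \<omega>)"
        using iY iR pt by (rule integral_norm_bound_integral')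
      also have "\<dots> = e + 2*B * measure M A1 + 2*B * measure M A2"
      proof -
        have ia: "integrable M (\<lambda>\<omega>. indicator A1 \<omega> :: real)" "integrable M (\<lambda>\<omega>. indicator A2 \<omega> :: real)"
          using A by (intro integrable_const_bound[where B=1] AE_I2 borel_measurable_indicator; simp add: indicator_def)+
        have "integral\<^sup>L M (\<lambda>\<omega>. e + 2*B * indicator A1 \<omega> + 2*B * indicator A2 \<omega>) =
           integral\<^sup>L M (\<lambda>\<omega>. e + 2*B * indicator A1 \<omega>) + integral\<^sup>L M (\<lambda>\<omega>. 2*B * indicator A2 \<omega>)"
          by (intro Bochner_Integration.integral_add Bochner_Integration.integrable_add integrable_mult_right ia integrable_const)
        also have "integral\<^sup>L M (\<lambda>\<omega>. e + 2*B * indicator A1 \<omega>) = integral\<^sup>L M (\<lambda>\<omega>. e) + integral\<^sup>L M (\<lambda>\<omega>. 2*B * indicator A1 \<omega>)"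
          by (intro Bochner_Integration.integral_add Bochner_Integration.integrable_add integrable_mult_right ia integrable_const)
        finally show ?thesis using A
          by (simp add: prob_space Int_absorb2 sets.sets_into_space)
      qed
      also have "\<dots> < e + 2*B*e + 2*B*e"
        using elim B by (intro add_le_less_mono add_left_mono mult_left_mono mult_strict_left_mono) (auto simp: A1_def A2_def)
      also have "\<dots> = e * (1 + 4 * B)" by (simp add: algebra_simps)
      also have "\<dots> = \<epsilon> / 2"
      proof -
        have nz: "1 + 4 * B \<noteq> 0" using B(2) by simp
        show ?thesis unfolding e_def using nz by (simp add: field_simps)
      qed
      also have "\<dots> \<le> \<epsilon>" using \<epsilon> by simp
      finally show ?case using iYa by (simp add: dist_real_def Bochner_Integration.integral_diff)
    qed
  qed
  have "((\<lambda>T. (integral\<^sup>L M (\<lambda>\<omega>. g (Y T \<omega>)) - integral\<^sup>L M (\<lambda>\<omega>. g (Z T \<omega>))) + integral\<^sup>L M (\<lambda>\<omega>. g (Z T \<omega>))) 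
      \<longlongrightarrow> 0 + integral\<^sup>L M (\<lambda>\<omega>. g (U \<omega>))) F"
    by (intro tendsto_add diff lim)
  then show "((\<lambda>T. integral\<^sup>L M (\<lambda>\<omega>. g (Y T \<omega>))) \<longlongrightarrow> integral\<^sup>L M (\<lambda>\<omega>. g (U \<omega>))) F" by simp
qed



lemma growth_bound:
  fixes f :: "'b::euclidean_space \<Rightarrow> real"
  assumes growth: "((\<lambda>u. \<bar>f u\<bar> / norm u powr m) \<longlongrightarrow> 0) at_infinity" and "\<eta> > 0"
  shows "\<exists>R\<ge>1. \<forall>u. norm u \<ge> R \<longrightarrow> \<bar>f u\<bar> \<le> \<eta> * norm u powr m"
proof -
  have "eventually (\<lambda>u. dist (\<bar>f u\<bar> / norm u powr m) 0 < \<eta>) at_infinity"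
    using growth assms(2) by (rule tendstoD)
  then obtain b where b: "\<And>u. norm u \<ge> b \<Longrightarrow> \<bar>f u\<bar> / norm u powr m < \<eta>"
    unfolding eventually_at_infinity by auto
  show ?thesis
  proof (intro exI[of _ "max b 1"] conjI allI impI)
    fix u :: 'b assume u: "norm u \<ge> max b 1"
    then have "norm u \<ge> 1" by (simp add: max_def split: if_splits)
    then have "norm u > 0" by (auto intro: order.strict_trans2[of 0 1])
    then have pos: "norm u powr m > 0" by simp
    from b[of u] u have "\<bar>f u\<bar> / norm u powr m < \<eta>" by simp
    with pos show "\<bar>f u\<bar> \<le> \<eta> * norm u powr m" by (simp add: divide_less_eq)
  qed simp
qed

lemma growth_bound2:
  fixes f :: "'b::euclidean_space \<Rightarrow> real"
  assumes growth: "((\<lambda>u. \<bar>f u\<bar> / norm u powr m) \<longlongrightarrow> 0) at_infinity" and fc: "continuous_on UNIV f"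
  shows "\<exists>C1\<ge>0. \<forall>u. \<bar>f u\<bar> \<le> norm u powr m + C1"
proof -
  obtain R where R: "R \<ge> 1" "\<forall>u. norm u \<ge> R \<longrightarrow> \<bar>f u\<bar> \<le> 1 * norm u powr m"
    using growth_bound[OF growth, of 1] by auto
  have "compact (f ` cball 0 R)"
    by (rule compact_continuous_image) (auto intro: continuous_on_subset[OF fc])
  then obtain C0 where C0: "\<forall>y\<in>f ` cball 0 R. norm y \<le> C0"
    using compact_imp_bounded bounded_iff by metis
  show ?thesis
  proof (intro exI[of _ "max C0 0"] conjI allI)
    fix u :: 'b
    show "\<bar>f u\<bar> \<le> norm u powr m + max C0 0"
    proof (cases "norm u \<ge> R")
      case True then show ?thesis using R by (smt (verit) max.cobounded2)
    next
      case False then have "\<bar>f u\<bar> \<le> C0" using C0 by auto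
      then show ?thesis by (smt (verit) powr_ge_zero max.cobounded1)
    qed
  qed simp
qed

lemma moment_conv:
  fixes Y :: "'i \<Rightarrow> 'a \<Rightarrow> 'b::euclidean_space" and U :: "'a \<Rightarrow> 'b" and f :: "'b \<Rightarrow> real"
  assumes M: "prob_space M" and Fnt: "F \<noteq> bot"
    and conv: "conv_in_distr M F Y U" and Umeas: "U \<in> borel_measurable M"
    and ev: "eventually (\<lambda>T. Y T \<in> borel_measurable M \<and> integrable M (\<lambda>\<omega>. norm (Y T \<omega>) powr m) \<and>
               integral\<^sup>L M (\<lambda>\<omega>. norm (Y T \<omega>) powr m) \<le> C) F"
    and m: "m > 0"
    and fc: "continuous_on UNIV f"
    and growth: "((\<lambda>u. \<bar>f u\<bar> / norm u powr m) \<longlongrightarrow> 0) at_infinity"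
  shows "((\<lambda>T. integral\<^sup>L M (\<lambda>\<omega>. f (Y T \<omega>))) \<longlongrightarrow> integral\<^sup>L M (\<lambda>\<omega>. f (U \<omega>))) F"
proof -
  interpret prob_space M by (rule M)
  have Umom: "integrable M (\<lambda>\<omega>. norm (U \<omega>) powr m) \<and> integral\<^sup>L M (\<lambda>\<omega>. norm (U \<omega>) powr m) \<le> C"
    by (rule limit_bound[OF M Fnt conv Umeas ev cont_norm_powr[OF m]]) simp
  have C0: "C \<ge> 0"
  proof -
    have "0 \<le> integral\<^sup>L M (\<lambda>\<omega>. norm (U \<omega>) powr m)" by (intro integral_nonneg_AE AE_I2 powr_ge_zero)
    with Umom show ?thesis by linarith
  qed
  have fm[measurable]: "f \<in> borel_measurable borel" using fc by (rule borel_measurable_continuous_onI)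
  have [measurable]: "U \<in> borel_measurable M" by (rule Umeas)
  obtain C1 where C1: "C1 \<ge> 0" "\<And>u. \<bar>f u\<bar> \<le> norm u powr m + C1"
    using growth_bound2[OF growth fc] by blast
  have intf: "integrable M (\<lambda>\<omega>. f (V \<omega>))"
    if V: "V \<in> borel_measurable M" "integrable M (\<lambda>\<omega>. norm (V \<omega>) powr m)" for V :: "'a \<Rightarrow> 'b"
  proof (rule Bochner_Integration.integrable_bound)
    show "integrable M (\<lambda>\<omega>. norm (V \<omega>) powr m + C1)"
      using V(2) by (intro Bochner_Integration.integrable_add) auto
    show "(\<lambda>\<omega>. f (V \<omega>)) \<in> borel_measurable M" using V(1) fm by (rule measurable_compose)
    show "AE \<omega> in M. norm (f (V \<omega>)) \<le> norm (norm (V \<omega>) powr m + C1)"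
      using C1 by (intro AE_I2) (smt (verit) powr_ge_zero real_norm_def)
  qed
  show ?thesis
  proof (rule tendstoI)
    fix \<epsilon> :: real assume \<epsilon>: "\<epsilon> > 0"
    define \<eta> where "\<eta> = \<epsilon> / (4 * (C + 1))"
    have \<eta>: "\<eta> > 0" "\<eta> * C < \<epsilon> / 4" using \<epsilon> C0 by (auto simp: \<eta>_def field_simps)
    obtain R where R: "R \<ge> 1" "\<And>u. norm u \<ge> R \<Longrightarrow> \<bar>f u\<bar> \<le> \<eta> * norm u powr m"
      using growth_bound[OF growth \<eta>(1)] by blast
    define \<phi> where "\<phi> u = max 0 (min 1 (R + 1 - norm u))" for u :: 'b
    define fR where "fR u = f u * \<phi> u" for u
    have \<phi>01: "0 \<le> \<phi> u" "\<phi> u \<le> 1" for u by (auto simp: \<phi>_def)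
    have fRc: "continuous_on UNIV fR" unfolding fR_def \<phi>_def using fc by (intro continuous_intros) auto
    have fRm[measurable]: "fR \<in> borel_measurable borel" using fRc by (rule borel_measurable_continuous_onI)
    have fRb: "\<bar>fR u\<bar> \<le> (R + 1) powr m + C1" for u
    proof (cases "norm u \<le> R + 1")
      case True
      have "\<bar>fR u\<bar> \<le> \<bar>f u\<bar>" using \<phi>01[of u] by (simp add: fR_def abs_mult mult_left_le)
      also have "\<dots> \<le> norm u powr m + C1" by (rule C1)
      also have "\<dots> \<le> (R + 1) powr m + C1" using True m by (simp add: powr_mono2)
      finally show ?thesis .
    next
      case False then have "\<phi> u = 0" by (simp add: \<phi>_def)
      then show ?thesis using C1 by (simp add: fR_def)
    qed
    have key: "\<bar>f u - fR u\<bar> \<le> \<eta> * norm u powr m" for u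
    proof (cases "norm u \<le> R")
      case True then have "\<phi> u = 1" by (simp add: \<phi>_def)
      then show ?thesis using \<eta> by (simp add: fR_def)
    next
      case False
      have "f u - fR u = f u * (1 - \<phi> u)" by (simp add: fR_def algebra_simps)
      then have "\<bar>f u - fR u\<bar> = \<bar>f u\<bar> * (1 - \<phi> u)" using \<phi>01[of u] by (simp add: abs_mult)
      also have "\<dots> \<le> \<bar>f u\<bar>" using \<phi>01[of u] by (simp add: mult_left_le)
      also have "\<dots> \<le> \<eta> * norm u powr m" using R False by simp
      finally show ?thesis .
    qed
    have diffb: "\<bar>integral\<^sup>L M (\<lambda>\<omega>. f (V \<omega>)) - integral\<^sup>L M (\<lambda>\<omega>. fR (V \<omega>))\<bar> < \<epsilon> / 4"
      if V: "V \<in> borel_measurable M" "integrable M (\<lambda>\<omega>. norm (V \<omega>) powr m)"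
         "integral\<^sup>L M (\<lambda>\<omega>. norm (V \<omega>) powr m) \<le> C" for V :: "'a \<Rightarrow> 'b"
    proof -
      have [measurable]: "V \<in> borel_measurable M" by (rule V(1))
      have iR: "integrable M (\<lambda>\<omega>. fR (V \<omega>))"
        by (rule integrable_const_bound[where B="(R + 1) powr m + C1"]) (auto intro!: AE_I2 simp: fRb)
      have "\<bar>integral\<^sup>L M (\<lambda>\<omega>. f (V \<omega>)) - integral\<^sup>L M (\<lambda>\<omega>. fR (V \<omega>))\<bar>
           = norm (integral\<^sup>L M (\<lambda>\<omega>. f (V \<omega>) - fR (V \<omega>)))"
        using intf[OF V(1,2)] iR by (simp add: Bochner_Integration.integral_diff)
      also have "\<dots> \<le> integral\<^sup>L M (\<lambda>\<omega>. \<eta> * norm (V \<omega>) powr m)"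
        by (rule integral_norm_bound_integral')
           (use intf[OF V(1,2)] iR V(2) key in \<open>auto intro: Bochner_Integration.integrable_diff\<close>)
      also have "\<dots> = \<eta> * integral\<^sup>L M (\<lambda>\<omega>. norm (V \<omega>) powr m)" by simp
      also have "\<dots> \<le> \<eta> * C" using V(3) \<eta> by (intro mult_left_mono) auto
      also have "\<dots> < \<epsilon> / 4" by (rule \<eta>(2))
      finally show ?thesis .
    qed
    have fRbd: "bounded (range fR)" unfolding bounded_iff using fRb by (intro exI[of _ "(R + 1) powr m + C1"]) auto
    have limR: "((\<lambda>T. integral\<^sup>L M (\<lambda>\<omega>. fR (Y T \<omega>))) \<longlongrightarrow> integral\<^sup>L M (\<lambda>\<omega>. fR (U \<omega>))) F"
      using conv fRc fRbd unfolding conv_in_distr_def by blast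
    have "eventually (\<lambda>T. dist (integral\<^sup>L M (\<lambda>\<omega>. fR (Y T \<omega>))) (integral\<^sup>L M (\<lambda>\<omega>. fR (U \<omega>))) < \<epsilon> / 4) F"
      using limR \<epsilon> by (intro tendstoD) auto
    then show "eventually (\<lambda>T. dist (integral\<^sup>L M (\<lambda>\<omega>. f (Y T \<omega>))) (integral\<^sup>L M (\<lambda>\<omega>. f (U \<omega>))) < \<epsilon>) F"
      using ev
    proof eventually_elim
      case (elim T)
      have a: "\<bar>integral\<^sup>L M (\<lambda>\<omega>. f (Y T \<omega>)) - integral\<^sup>L M (\<lambda>\<omega>. fR (Y T \<omega>))\<bar> < \<epsilon> / 4"
        using elim by (intro diffb) auto
      have b: "\<bar>integral\<^sup>L M (\<lambda>\<omega>. f (U \<omega>)) - integral\<^sup>L M (\<lambda>\<omega>. fR (U \<omega>))\<bar> < \<epsilon> / 4"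
        using Umom by (intro diffb) auto
      show ?case using a b elim(1) unfolding dist_real_def by linarith
    qed
  qed
qed



lemma continuous_det: "continuous_on UNIV (det :: real^'n^'n \<Rightarrow> real)"
proof -
  have eq: "det = (\<lambda>A::real^'n^'n. \<Sum>p\<in>{p. p permutes (UNIV::'n set)}. of_int (sign p) * (\<Prod>i\<in>UNIV. A$i$p i))"
    by (rule ext) (simp add: det_def)
  show ?thesis by (subst eq) (intro continuous_intros)
qed

lemma det_meas:
  fixes A :: "'a \<Rightarrow> real^'n^'n"
  assumes "A \<in> borel_measurable M"
  shows "(\<lambda>\<omega>. det (A \<omega>)) \<in> borel_measurable M"
  using measurable_compose[OF assms borel_measurable_continuous_onI[OF continuous_det]] by simp

lemma matrix_inv_apply:
  fixes B :: "real^'n^'n"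
  assumes "det B \<noteq> 0"
  shows "matrix_inv B *v v = (\<chi> k. det (\<chi> i j. if j = k then v$i else B$i$j) / det B)"
proof -
  have inv: "invertible B" using assms by (simp add: invertible_det_nz)
  then have "B ** matrix_inv B = mat 1 \<and> matrix_inv B ** B = mat 1"
    unfolding invertible_def matrix_inv_def by (rule someI_ex)
  then have "B *v (matrix_inv B *v v) = v"
    by (simp add: matrix_vector_mul_assoc)
  then show ?thesis using cramer[OF assms] by blast
qed

lemma block_inv_meas:
  fixes Gamma :: "'a \<Rightarrow> real^'p^'p" and Delta :: "'a \<Rightarrow> real^'p"
  assumes G: "Gamma \<in> borel_measurable M" and D: "Delta \<in> borel_measurable M"
  shows "(\<lambda>\<omega>. block_inv_apply J (Gamma \<omega>) (Delta \<omega> - psi)) \<in> borel_measurable M"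
proof -
  define Bf where "Bf \<omega> = (\<chi> i k. if i \<in> J \<and> k \<in> J then Gamma \<omega> $ i $ k else if i = k then 1 else (0::real))" for \<omega>
  define v where "v \<omega> = proj J (Delta \<omega> - psi)" for \<omega>
  define N where "N k \<omega> = (\<chi> i j. if j = k then v \<omega> $ i else Bf \<omega> $ i $ j)" for k \<omega>
  have eq: "block_inv_apply J (Gamma \<omega>) (Delta \<omega> - psi) =
     (if det (Bf \<omega>) \<noteq> 0 then (\<chi> k. det (N k \<omega>) / det (Bf \<omega>)) else 0)" for \<omega>
    unfolding block_inv_apply_def Let_def Bf_def[symmetric] v_def[symmetric] N_def
    by (simp add: invertible_det_nz matrix_inv_apply)
  have Gij[measurable]: "(\<lambda>\<omega>. Gamma \<omega> $ i $ j) \<in> borel_measurable M" for i j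
    by (intro measurable_nth G)
  have Bm: "Bf \<in> borel_measurable M"
    unfolding Bf_def by (intro measurable_vec) (simp; measurable)
  have vm: "v \<in> borel_measurable M"
  proof -
    have [measurable]: "(\<lambda>\<omega>. Delta \<omega> $ i) \<in> borel_measurable M" for i by (intro measurable_nth D)
    show ?thesis unfolding v_def proj_def
    proof (intro measurable_vec)
      fix i
      show "(\<lambda>x. (\<chi> j. if j \<in> J then (Delta x - psi) $ j else 0) $ i) \<in> borel_measurable M"
      proof (cases "i \<in> J")
        case True
        then show ?thesis using borel_measurable_diff[OF measurable_nth[OF D, of i] borel_measurable_const[of "psi $ i"]]
          by simp
      qed simp
    qed
  qed
  have Bij: "(\<lambda>\<omega>. Bf \<omega> $ i $ j) \<in> borel_measurable M" for i j
    by (intro measurable_nth Bm)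
  have vi: "(\<lambda>\<omega>. v \<omega> $ i) \<in> borel_measurable M" for i
    by (intro measurable_nth vm)
  have Nm: "N k \<in> borel_measurable M" for k
    unfolding N_def
  proof (intro measurable_vec)
    fix i j
    show "(\<lambda>x. (\<chi> i j. if j = k then v x $ i else Bf x $ i $ j) $ i $ j) \<in> borel_measurable M"
      by (cases "j = k") (simp_all add: Bij vi)
  qed
  have [measurable]: "(\<lambda>\<omega>. det (Bf \<omega>)) \<in> borel_measurable M" by (rule det_meas[OF Bm])
  have [measurable]: "(\<lambda>\<omega>. det (N k \<omega>)) \<in> borel_measurable M" for k by (rule det_meas[OF Nm])
  show ?thesis unfolding eq
    by (intro measurable_vec) (simp add: if_distrib[where f="\<lambda>x. x $ _"] cong del: if_weak_cong)
qed



theorem theorem7: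
  fixes M :: "'a measure"
    and TT :: "real set"
    and Theta :: "(real^'p) set"
    and theta_star :: "real^'p"
    and H :: "real \<Rightarrow> 'a \<Rightarrow> real^'p \<Rightarrow> real"
    and xi :: "real \<Rightarrow> 'a \<Rightarrow> 'p \<Rightarrow> real"
    and pen :: "real \<Rightarrow> real"
    and theta_hat :: "real \<Rightarrow> 'a \<Rightarrow> real^'p"
    and alpha :: "real \<Rightarrow> 'p \<Rightarrow> real"
    and q m :: real
    and Delta :: "'a \<Rightarrow> real^'p"
    and Gamma :: "'a \<Rightarrow> real^'p^'p"
    and psi :: "real^'p"
    and f :: "real^'p \<Rightarrow> real"
  defines "J0 \<equiv> {j. theta_star $ j = 0}"
    and "J1 \<equiv> {j. theta_star $ j \<noteq> 0}"
    and "F \<equiv> along TT"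
    and "Hdag \<equiv> (\<lambda>T \<omega> \<theta>. H T \<omega> \<theta> - (\<Sum>j\<in>UNIV. xi T \<omega> j * pen (\<theta> $ j)))"
    and "u_hat \<equiv> (\<lambda>T \<omega>. \<chi> j. (theta_hat T \<omega> $ j - theta_star $ j) / alpha T j)"
    and "u_tilde \<equiv> (\<lambda>\<omega>. block_inv_apply {j. theta_star $ j \<noteq> 0} (Gamma \<omega>) (Delta \<omega> - psi))"
  assumes M: "prob_space M"
    and TT_nonneg: "TT \<subseteq> {0..}"
    and TT_unbounded: "\<forall>x. \<exists>T\<in>TT. x < T"
    and Theta: "bounded Theta" "open Theta" "theta_star \<in> Theta"
    and H_cont: "\<forall>T\<in>TT. \<forall>\<omega>. continuous_on (closure Theta) (H T \<omega>)"
    and H_meas: "\<forall>T\<in>TT. \<forall>\<theta>\<in>closure Theta. (\<lambda>\<omega>. H T \<omega> \<theta>) \<in> borel_measurable M"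
    and pen: "\<forall>x. pen x \<ge> 0" "pen 0 = 0"
    and xi_pos: "\<forall>T\<in>TT. \<forall>\<omega>\<in>space M. \<forall>j. xi T \<omega> j > 0"
    and xi_meas: "\<forall>T\<in>TT. \<forall>j. (\<lambda>\<omega>. xi T \<omega> j) \<in> borel_measurable M"
    and theta_hat_meas: "\<forall>T\<in>TT. theta_hat T \<in> borel_measurable M"
    and theta_hat_in: "\<forall>T\<in>TT. \<forall>\<omega>\<in>space M. theta_hat T \<omega> \<in> closure Theta"
    and theta_hat_max: "\<forall>T\<in>TT. \<forall>\<omega>\<in>space M. \<forall>\<theta>\<in>closure Theta.
                          Hdag T \<omega> \<theta> \<le> Hdag T \<omega> (theta_hat T \<omega>)"
    and alpha_nz: "\<forall>T\<in>TT. \<forall>j. alpha T j \<noteq> 0"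
    and alpha_lim: "\<forall>j. ((\<lambda>T. alpha T j) \<longlongrightarrow> 0) F"
    and q: "0 < q" "q \<le> 1"
    and m: "m > 0"
    and moment: "(SUP T\<in>TT. \<integral>\<^sup>+ \<omega>. ennreal (norm (u_hat T \<omega>) powr m) \<partial>M) < \<infinity>"
    and A6: "\<forall>j\<in>J0. conv_in_prob M F (\<lambda>T \<omega>. xi T \<omega> j powr (-1/q) / \<bar>alpha T j\<bar>) 0"
    and conv0: "conv_in_prob M F
        (\<lambda>T \<omega>. \<chi> j. if j \<in> J0 then (theta_hat T \<omega> $ j - theta_star $ j) / (xi T \<omega> j powr (-1/q)) else 0) 0"
    and conv1: "conv_in_distr M F
        (\<lambda>T \<omega>. \<chi> j. if j \<in> J1 then (theta_hat T \<omega> $ j - theta_star $ j) / alpha T j else 0) u_tilde"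
    and Delta_meas: "Delta \<in> borel_measurable M"
    and Gamma_meas: "Gamma \<in> borel_measurable M"
    and Gamma_pd: "AE \<omega> in M. transpose (Gamma \<omega>) = Gamma \<omega> \<and>
                      (\<forall>x. x \<noteq> 0 \<longrightarrow> x \<bullet> (Gamma \<omega> *v x) > 0)"
    and f_cont: "continuous_on UNIV f"
    and f_growth: "((\<lambda>u. \<bar>f u\<bar> / norm u powr m) \<longlongrightarrow> 0) at_infinity"
  shows "((\<lambda>T. integral\<^sup>L M (\<lambda>\<omega>. f (u_hat T \<omega>))) \<longlongrightarrow> integral\<^sup>L M (\<lambda>\<omega>. f (u_tilde \<omega>))) F"
proof -
  interpret prob_space M by (rule M)
  have fin: "finite_measure M" using M unfolding prob_space_def by blast
  have Fnt: "F \<noteq> bot" unfolding F_def using TT_unbounded by (rule along_nontriv)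
  have evT: "eventually (\<lambda>T. T \<in> TT) F" unfolding F_def by (rule along_eventually_TT)
  define Z where "Z = (\<lambda>T \<omega>. \<chi> j. if j \<in> J1 then (theta_hat T \<omega> $ j - theta_star $ j) / alpha T j else 0)"
  define V where "V = (\<lambda>T \<omega>. \<chi> j. if j \<in> J0 then (theta_hat T \<omega> $ j - theta_star $ j) / (xi T \<omega> j powr (-1/q)) else 0)"
  define W where "W = (\<lambda>j T \<omega>. xi T \<omega> j powr (-1/q) / \<bar>alpha T j\<bar>)"
  have meas: "u_hat T \<in> borel_measurable M \<and> Z T \<in> borel_measurable M \<and>
      (\<lambda>\<omega>. norm (V T \<omega>)) \<in> borel_measurable M \<and> (\<forall>j. (\<lambda>\<omega>. \<bar>W j T \<omega>\<bar>) \<in> borel_measurable M)"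
    if T: "T \<in> TT" for T
  proof -
    have [measurable]: "(\<lambda>\<omega>. theta_hat T \<omega> $ j) \<in> borel_measurable M" for j
      using theta_hat_meas T by (intro measurable_nth) auto
    have [measurable]: "(\<lambda>\<omega>. xi T \<omega> j) \<in> borel_measurable M" for j
      using xi_meas T by auto
    have "u_hat T \<in> borel_measurable M" unfolding u_hat_def by (intro measurable_vec) (simp; measurable)
    moreover have "Z T \<in> borel_measurable M" unfolding Z_def by (intro measurable_vec) (simp; measurable)
    moreover have "V T \<in> borel_measurable M" unfolding V_def by (intro measurable_vec) (simp; measurable)
    then have "(\<lambda>\<omega>. norm (V T \<omega>)) \<in> borel_measurable M" by measurable
    moreover have "(\<lambda>\<omega>. \<bar>W j T \<omega>\<bar>) \<in> borel_measurable M" for j unfolding W_def by measurable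
    ultimately show ?thesis by blast
  qed
  have cpV: "cp M F (\<lambda>T \<omega>. norm (V T \<omega>))"
    using conv0 unfolding V_def[symmetric] conv_in_prob_def cp_def by simp
  have cpW: "cp M F (\<lambda>T \<omega>. \<bar>W j T \<omega>\<bar>)" if "j \<in> J0" for j
    using A6 that unfolding W_def conv_in_prob_def cp_def by (simp add: dist_real_def)
  have cpX: "cp M F (\<lambda>T \<omega>. \<Sum>j\<in>J0. norm (V T \<omega>) * \<bar>W j T \<omega>\<bar>) \<and>
       eventually (\<lambda>T. (\<lambda>\<omega>. \<Sum>j\<in>J0. norm (V T \<omega>) * \<bar>W j T \<omega>\<bar>) \<in> borel_measurable M) F"
  proof (rule cp_sum[OF fin])
    fix j assume j: "j \<in> J0"
    show "cp M F (\<lambda>T \<omega>. norm (V T \<omega>) * \<bar>W j T \<omega>\<bar>)"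
      by (rule cp_mult[OF fin cpV cpW[OF j]]) (use evT meas in \<open>auto elim!: eventually_mono\<close>)
    show "eventually (\<lambda>T. (\<lambda>\<omega>. norm (V T \<omega>) * \<bar>W j T \<omega>\<bar>) \<in> borel_measurable M) F"
      using evT by eventually_elim (use meas in \<open>auto intro: borel_measurable_times\<close>)
  qed simp
  have dbound: "dist (u_hat T \<omega>) (Z T \<omega>) \<le> (\<Sum>j\<in>J0. norm (V T \<omega>) * \<bar>W j T \<omega>\<bar>)"
    if T: "T \<in> TT" and w: "\<omega> \<in> space M" for T \<omega>
  proof -
    have comp: "(u_hat T \<omega> - Z T \<omega>) $ j = (if j \<in> J0 then (theta_hat T \<omega> $ j - theta_star $ j) / alpha T j else 0)" for j
      by (simp add: u_hat_def Z_def J0_def J1_def)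
    have "dist (u_hat T \<omega>) (Z T \<omega>) = norm (u_hat T \<omega> - Z T \<omega>)" by (simp add: dist_norm)
    also have "\<dots> \<le> (\<Sum>j\<in>UNIV. \<bar>(u_hat T \<omega> - Z T \<omega>) $ j\<bar>)" by (rule norm_le_l1_cart)
    also have "\<dots> = (\<Sum>j\<in>J0. \<bar>(theta_hat T \<omega> $ j - theta_star $ j) / alpha T j\<bar>)"
      unfolding comp by (simp add: if_distrib[where f=abs] sum.If_cases)
    also have "\<dots> \<le> (\<Sum>j\<in>J0. norm (V T \<omega>) * \<bar>W j T \<omega>\<bar>)"
    proof (rule sum_mono)
      fix j assume j: "j \<in> J0"
      have "xi T \<omega> j > 0" using xi_pos T w by blast
      then have xp: "xi T \<omega> j powr (-1/q) > 0" by simp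
      have a: "\<bar>alpha T j\<bar> > 0" using alpha_nz T by simp
      have "\<bar>(theta_hat T \<omega> $ j - theta_star $ j) / alpha T j\<bar> = \<bar>V T \<omega> $ j\<bar> * \<bar>W j T \<omega>\<bar>"
        using j xp a by (simp add: V_def W_def abs_mult abs_divide)
      also have "\<dots> \<le> norm (V T \<omega>) * \<bar>W j T \<omega>\<bar>"
        by (intro mult_right_mono component_le_norm_cart) simp
      finally show "\<bar>(theta_hat T \<omega> $ j - theta_star $ j) / alpha T j\<bar> \<le> norm (V T \<omega>) * \<bar>W j T \<omega>\<bar>" .
    qed
    finally show ?thesis .
  qed
  have cpD: "cp M F (\<lambda>T \<omega>. dist (u_hat T \<omega>) (Z T \<omega>))"
    by (rule cp_mono[OF fin conjunct1[OF cpX]]) (use evT conjunct2[OF cpX] dbound in \<open>auto elim: eventually_elim2\<close>)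
  define S where "S = (SUP T\<in>TT. \<integral>\<^sup>+ \<omega>. ennreal (norm (u_hat T \<omega>) powr m) \<partial>M)"
  define Cm where "Cm = enn2real S"
  have SCm: "S = ennreal Cm" using moment unfolding S_def[symmetric] Cm_def by (simp add: less_top[symmetric])
  have Cm0: "Cm \<ge> 0" by (simp add: Cm_def)
  have mom: "integrable M (\<lambda>\<omega>. norm (u_hat T \<omega>) powr m) \<and> integral\<^sup>L M (\<lambda>\<omega>. norm (u_hat T \<omega>) powr m) \<le> Cm"
    if T: "T \<in> TT" for T
  proof -
    have [measurable]: "u_hat T \<in> borel_measurable M" using meas T by blast
    have le: "(\<integral>\<^sup>+ \<omega>. ennreal (norm (u_hat T \<omega>) powr m) \<partial>M) \<le> ennreal Cm"
      unfolding SCm[symmetric] S_def using T by (rule SUP_upper)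
    have int: "integrable M (\<lambda>\<omega>. norm (u_hat T \<omega>) powr m)"
    proof (rule integrableI_bounded)
      show "(\<integral>\<^sup>+ \<omega>. ennreal (norm (norm (u_hat T \<omega>) powr m)) \<partial>M) < \<infinity>"
        using le by (simp add: order.strict_trans1)
    qed measurable
    have "ennreal (integral\<^sup>L M (\<lambda>\<omega>. norm (u_hat T \<omega>) powr m)) \<le> ennreal Cm"
      using le by (subst nn_integral_eq_integral[symmetric]) (auto simp: int)
    then show ?thesis using int Cm0 by (simp add: ennreal_le_iff)
  qed
  have tight: "\<forall>\<epsilon>>0. \<exists>R. eventually (\<lambda>T. measure M {\<omega>\<in>space M. norm (u_hat T \<omega>) > R} \<le> \<epsilon>) F"
  proof (intro allI impI)
    fix \<epsilon> :: real assume \<epsilon>: "\<epsilon> > 0"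
    define R where "R = (Cm / \<epsilon> + 1) powr (1 / m)"
    have pos: "Cm / \<epsilon> + 1 > 0" using Cm0 \<epsilon> by (simp add: add_nonneg_pos)
    have R0: "R > 0" using pos by (simp add: R_def)
    have Rm: "R powr m = Cm / \<epsilon> + 1"
      unfolding R_def using pos m by (simp add: powr_powr)
    have "Cm / (R powr m) \<le> \<epsilon>"
      unfolding Rm using Cm0 \<epsilon> by (simp add: divide_le_eq field_simps)
    show "\<exists>R. eventually (\<lambda>T. measure M {\<omega>\<in>space M. norm (u_hat T \<omega>) > R} \<le> \<epsilon>) F"
    proof (intro exI[of _ R])
      show "eventually (\<lambda>T. measure M {\<omega>\<in>space M. norm (u_hat T \<omega>) > R} \<le> \<epsilon>) F"
        using evT
      proof eventually_elim
        case (elim T)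
        have [measurable]: "u_hat T \<in> borel_measurable M" using meas elim by blast
        have "measure M {\<omega>\<in>space M. norm (u_hat T \<omega>) > R} \<le> measure M {\<omega>\<in>space M. norm (u_hat T \<omega>) powr m \<ge> R powr m}"
        proof (rule finite_measure_mono)
          show "{\<omega>\<in>space M. norm (u_hat T \<omega>) > R} \<subseteq> {\<omega>\<in>space M. norm (u_hat T \<omega>) powr m \<ge> R powr m}"
            using R0 m by (auto intro: powr_mono2)
        qed measurable
        also have "\<dots> \<le> integral\<^sup>L M (\<lambda>\<omega>. norm (u_hat T \<omega>) powr m) / R powr m"
          using mom[OF elim] R0 by (intro integral_Markov_inequality_measure[where A="space M"]) auto
        also have "\<dots> \<le> Cm / R powr m"
          using mom[OF elim] R0 by (intro divide_right_mono) auto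
        also have "\<dots> \<le> \<epsilon>" by fact
        finally show ?case .
      qed
    qed
  qed
  have slut: "conv_in_distr M F u_hat u_tilde"
  proof (rule slutsky[OF M Fnt _ _ cpD tight])
    show "conv_in_distr M F Z u_tilde" using conv1 unfolding Z_def .
    show "eventually (\<lambda>T. u_hat T \<in> borel_measurable M \<and> Z T \<in> borel_measurable M) F"
      using evT by eventually_elim (use meas in blast)
  qed
  have Umeas: "u_tilde \<in> borel_measurable M"
    unfolding u_tilde_def by (rule block_inv_meas[OF Gamma_meas Delta_meas])
  have evmom: "eventually (\<lambda>T. u_hat T \<in> borel_measurable M \<and> integrable M (\<lambda>\<omega>. norm (u_hat T \<omega>) powr m) \<and>
               integral\<^sup>L M (\<lambda>\<omega>. norm (u_hat T \<omega>) powr m) \<le> Cm) F"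
    using evT by eventually_elim (use meas mom in blast)
  show ?thesis by (rule moment_conv[OF M Fnt slut Umeas evmom m f_cont f_growth])
qed

end
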